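(* Let $X$ and $Y$ be finite sets, let $I = X \cap Y$, and let $p \in [1/2, 1]$. Let $Z = |X \cap Y_{\mathrm{sub}}|$, where $Y_{\mathrm{sub}} \subseteq Y$ is obtained by including each element of $Y$ independently with probability $p$. Let $Z'' = |I \setminus T_1| + \sum_{y \in T_1} c_y$, where $s_1 \sim \mathrm{Bin}(|I|, 2(1-p))$, $T_1$ is chosen uniformly at random among subsets of $I$ of size $s_1$, and the $c_y \sim \mathrm{Ber}(1/2)$, $y\in T_1$, are independent fair coins. Then $Z$ and $Z''$ are identically distributed. Consequently, for any $\epsilon>0$, $\delta \in [0,1)$, the map $Y \mapsto Z$ (with $X$ and $p$ fixed) is $(\epsilon,\delta)$-differentially private with respect to $Y$ if and only if the map $Y \mapsto Z''$ is.
   Context: $\mathrm{Ber}(r)$ denotes a Bernoulli random variable with success probability $r$, and $\mathrm{Bin}(m,r)$ a binomial random variable. A randomized mechanism $\mathcal M$ taking a finite set $Y$ as input is $(\epsilon,\delta)$-differentially private with respect to $Y$ if for all neighboring inputs $Y \sim Y'$ and every set $W$ of outputs, $\Pr[\mathcal M(Y) \in W] \le e^{\epsilon}\Pr[\mathcal M(Y') \in W] + \delta$. Neighbors are in the bounded sense: $Y'$ is obtained from $Y$ by replacing exactly one element with another element (so $|Y|=|Y'|$). *)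

theory Defs
  imports "HOL-Probability.Probability"
begin

definition random_subset :: "'a set \<Rightarrow> real \<Rightarrow> 'a set pmf" where
  "random_subset Y p = map_pmf (\<lambda>f. {y\<in>Y. f y}) (Pi_pmf Y False (\<lambda>_. bernoulli_pmf p))"

definition Z_dist :: "'a set \<Rightarrow> real \<Rightarrow> 'a set \<Rightarrow> nat pmf" where
  "Z_dist X p Y = map_pmf (\<lambda>S. card (X \<inter> S)) (random_subset Y p)"

definition Z''_dist :: "'a set \<Rightarrow> real \<Rightarrow> 'a set \<Rightarrow> nat pmf" where
  "Z''_dist X p Y =
     do { s1 \<leftarrow> binomial_pmf (card (X \<inter> Y)) (2 * (1 - p));
          T1 \<leftarrow> pmf_of_set {T. T \<subseteq> X \<inter> Y \<and> card T = s1};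
          c \<leftarrow> Pi_pmf T1 False (\<lambda>_. bernoulli_pmf (1/2));
          return_pmf (card ((X \<inter> Y) - T1) + card {y\<in>T1. c y}) }"

definition neighbours :: "'a set \<Rightarrow> 'a set \<Rightarrow> bool" where
  "neighbours Y Y' \<longleftrightarrow> (\<exists>a b. a \<in> Y \<and> b \<notin> Y \<and> Y' = insert b (Y - {a}))"

definition diff_private :: "real \<Rightarrow> real \<Rightarrow> ('a set \<Rightarrow> 'b pmf) \<Rightarrow> bool" where
  "diff_private \<epsilon> \<delta> M \<longleftrightarrow>
     (\<forall>Y Y' W. finite Y \<and> finite Y' \<and> neighbours Y Y' \<longrightarrow>
        measure_pmf.prob (M Y) W \<le> exp \<epsilon> * measure_pmf.prob (M Y') W + \<delta>)"

end

theory Submission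
  imports Defs
begin

lemma random_subset_pmf:
  assumes A: "finite A" and q: "0 \<le> q" "q \<le> 1" and T: "T \<subseteq> A"
  shows "pmf (random_subset A q) T = q ^ card T * (1 - q) ^ (card A - card T)"
proof -
  let ?M = "Pi_pmf A False (\<lambda>_. bernoulli_pmf q)"
  let ?g = "\<lambda>f. {y\<in>A. f y}"
  have "pmf (random_subset A q) T = measure ?M (?g -` {T})"
    unfolding random_subset_def by (simp add: pmf_map)
  also have "\<dots> = measure ?M (?g -` {T} \<inter> set_pmf ?M)"
    by (simp add: measure_Int_set_pmf)
  also have "?g -` {T} \<inter> set_pmf ?M = {(\<lambda>y. y \<in> T)} \<inter> set_pmf ?M"
  proof -
    have "f = (\<lambda>y. y \<in> T)" if "f \<in> set_pmf ?M" "?g f = T" for f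
    proof -
      have "\<forall>x. x \<notin> A \<longrightarrow> f x = False" using set_Pi_pmf_subset[OF A, of False "\<lambda>_. bernoulli_pmf q"] that(1) by blast
      then show ?thesis using that(2) by (auto simp: fun_eq_iff)
    qed
    moreover have "?g (\<lambda>y. y \<in> T) = T" using T by auto
    ultimately show ?thesis by auto
  qed
  also have "measure ?M \<dots> = pmf ?M (\<lambda>y. y \<in> T)"
    by (simp add: measure_Int_set_pmf measure_pmf_single)
  also have "\<dots> = (\<Prod>x\<in>A. pmf (bernoulli_pmf q) (x \<in> T))"
    using A T by (subst pmf_Pi') auto
  also have "\<dots> = (\<Prod>x\<in>T. pmf (bernoulli_pmf q) (x \<in> T)) * (\<Prod>x\<in>A-T. pmf (bernoulli_pmf q) (x \<in> T))"
    using A T by (metis (no_types, lifting) finite_subset prod.subset_diff mult.commute)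
  also have "\<dots> = q ^ card T * (1 - q) ^ card (A - T)"
    using q by simp
  also have "card (A - T) = card A - card T" using A T by (simp add: card_Diff_subset finite_subset)
  finally show ?thesis .
qed

lemma random_subset_not_subset:
  assumes A: "finite A" and T: "\<not> T \<subseteq> A"
  shows "pmf (random_subset A q) T = 0"
  unfolding random_subset_def using T by (subst pmf_eq_0_set_pmf) auto

lemma random_subset_binomial:
  assumes A: "finite A" and q: "0 \<le> q" "q \<le> 1"
  shows "random_subset A q = binomial_pmf (card A) q \<bind> (\<lambda>k. pmf_of_set {T. T \<subseteq> A \<and> card T = k})"
proof (rule pmf_eqI)
  fix T
  let ?n = "card A"
  let ?S = "\<lambda>k. {T. T \<subseteq> A \<and> card T = k}"
  have "pmf (binomial_pmf ?n q \<bind> (\<lambda>k. pmf_of_set (?S k))) T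
        = (\<integral>k. pmf (pmf_of_set (?S k)) T \<partial>binomial_pmf ?n q)"
    by (simp add: pmf_bind)
  also have "\<dots> = (\<integral>k. (if T \<subseteq> A then 1 / real (?n choose card T) else 0) * indicator {card T} k \<partial>binomial_pmf ?n q)"
  proof (rule integral_cong_AE)
    show "AE k in measure_pmf (binomial_pmf ?n q). pmf (pmf_of_set (?S k)) T =
       (if T \<subseteq> A then 1 / real (?n choose card T) else 0) * indicator {card T} k"
    proof (rule AE_pmfI)
      fix k assume "k \<in> set_pmf (binomial_pmf ?n q)"
      then have k: "k \<le> ?n" using q by (auto simp: set_pmf_binomial_eq split: if_splits)
      have fin: "finite (?S k)" using A by simp
      have ne: "?S k \<noteq> {}"
      proof -
        obtain B where "B \<subseteq> A" "card B = k" using k by (meson obtain_subset_with_card_n)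
        then show ?thesis by auto
      qed
      show "pmf (pmf_of_set (?S k)) T =
       (if T \<subseteq> A then 1 / real (?n choose card T) else 0) * indicator {card T} k"
        using fin ne A by (auto simp: n_subsets indicator_def)
    qed
  qed auto
  also have "\<dots> = (if T \<subseteq> A then 1 / real (?n choose card T) else 0) * pmf (binomial_pmf ?n q) (card T)"
    by (simp add: measure_pmf_single)
  also have "\<dots> = pmf (random_subset A q) T"
  proof (cases "T \<subseteq> A")
    case True
    have "card T \<le> ?n" using True A by (simp add: card_mono)
    then have "real (?n choose card T) > 0" by simp
    then show ?thesis using True q A by (simp add: random_subset_pmf)
  next
    case False
    then show ?thesis using A by (simp add: random_subset_not_subset)
  qed
  finally show "pmf (random_subset A q) T = pmf (binomial_pmf ?n q \<bind> (\<lambda>k. pmf_of_set (?S k))) T" ..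
qed


lemma coin_mix:
  assumes q: "0 \<le> q" "q \<le> 1"
  shows "bernoulli_pmf q \<bind> (\<lambda>a. bernoulli_pmf (1/2) \<bind> (\<lambda>b. return_pmf (\<not>a \<or> b))) = bernoulli_pmf (1 - q/2)"
proof (rule pmf_eqI)
  fix e :: bool
  show "pmf (bernoulli_pmf q \<bind> (\<lambda>a. bernoulli_pmf (1/2) \<bind> (\<lambda>b. return_pmf (\<not>a \<or> b)))) e = pmf (bernoulli_pmf (1 - q/2)) e"
    using q by (cases e) (simp_all add: pmf_bind indicator_def algebra_simps)
qed

lemma mix_binomial:
  assumes A: "finite A" and q: "0 \<le> q" "q \<le> 1"
  shows "Pi_pmf A False (\<lambda>_. bernoulli_pmf q) \<bind> (\<lambda>f. Pi_pmf A False (\<lambda>_. bernoulli_pmf (1/2)) \<bind>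
            (\<lambda>c. return_pmf (card {y\<in>A. \<not> f y \<or> c y}))) = binomial_pmf (card A) (1 - q/2)"
  using A
proof (induction rule: finite_induct)
  case empty
  then show ?case using q by (simp add: bind_return_pmf binomial_pmf_0)
next
  case (insert x A)
  let ?P = "Pi_pmf A False (\<lambda>_. bernoulli_pmf q)"
  let ?C = "Pi_pmf A False (\<lambda>_. bernoulli_pmf (1/2))"
  have cardeq: "card {y\<in>insert x A. \<not> (f(x:=a)) y \<or> (c(x:=b)) y} = (if \<not>a \<or> b then 1 else 0) + card {y\<in>A. \<not> f y \<or> c y}" for f c a b
  proof -
    have "{y\<in>insert x A. \<not> (f(x:=a)) y \<or> (c(x:=b)) y} = (if \<not>a \<or> b then {x} else {}) \<union> {y\<in>A. \<not> f y \<or> c y}"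
      using insert.hyps by auto
    then show ?thesis using insert.hyps by auto
  qed
  have "Pi_pmf (insert x A) False (\<lambda>_. bernoulli_pmf q) \<bind> (\<lambda>f. Pi_pmf (insert x A) False (\<lambda>_. bernoulli_pmf (1/2)) \<bind>
            (\<lambda>c. return_pmf (card {y\<in>insert x A. \<not> f y \<or> c y})))
      = bernoulli_pmf q \<bind> (\<lambda>a. ?P \<bind> (\<lambda>f. bernoulli_pmf (1/2) \<bind> (\<lambda>b. ?C \<bind> (\<lambda>c.
            return_pmf (card {y\<in>insert x A. \<not> (f(x:=a)) y \<or> (c(x:=b)) y})))))"
    using insert.hyps by (simp add: Pi_pmf_insert' bind_assoc_pmf bind_return_pmf)
  also have "\<dots> = bernoulli_pmf q \<bind> (\<lambda>a. ?P \<bind> (\<lambda>f. bernoulli_pmf (1/2) \<bind> (\<lambda>b. ?C \<bind> (\<lambda>c.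
            return_pmf ((if \<not>a \<or> b then 1 else 0) + card {y\<in>A. \<not> f y \<or> c y})))))"
    by (simp only: cardeq)
  also have "\<dots> = bernoulli_pmf q \<bind> (\<lambda>a. bernoulli_pmf (1/2) \<bind> (\<lambda>b. ?P \<bind> (\<lambda>f. ?C \<bind> (\<lambda>c.
            return_pmf ((if \<not>a \<or> b then 1 else 0) + card {y\<in>A. \<not> f y \<or> c y})))))"
    by (subst bind_commute_pmf) (rule refl)
  also have "\<dots> = (bernoulli_pmf q \<bind> (\<lambda>a. bernoulli_pmf (1/2) \<bind> (\<lambda>b. return_pmf (\<not>a \<or> b)))) \<bind> (\<lambda>e.
          (?P \<bind> (\<lambda>f. ?C \<bind> (\<lambda>c. return_pmf (card {y\<in>A. \<not> f y \<or> c y})))) \<bind> (\<lambda>k.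
            return_pmf ((if e then 1 else 0) + k)))"
    by (simp add: bind_assoc_pmf bind_return_pmf)
  also have "\<dots> = binomial_pmf (Suc (card A)) (1 - q/2)"
    unfolding coin_mix[OF q] insert.IH using q by (simp add: binomial_pmf_Suc)
  also have "Suc (card A) = card (insert x A)" using insert.hyps by simp
  finally show ?case .
qed


lemma Z_binomial:
  assumes X: "finite X" and Y: "finite Y" and p: "0 \<le> p" "p \<le> 1"
  shows "Z_dist X p Y = binomial_pmf (card (X \<inter> Y)) p"
proof -
  let ?I = "X \<inter> Y"
  have "binomial_pmf (card ?I) p = map_pmf (\<lambda>f. card {y\<in>?I. f y}) (Pi_pmf ?I False (\<lambda>_. bernoulli_pmf p))"
    using X p by (intro binomial_pmf_altdef') auto
  also have "Pi_pmf ?I False (\<lambda>_. bernoulli_pmf p) = map_pmf (\<lambda>f x. if x \<in> ?I then f x else False) (Pi_pmf Y False (\<lambda>_. bernoulli_pmf p))"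
    using Y by (intro Pi_pmf_subset) auto
  also have "map_pmf (\<lambda>f. card {y\<in>?I. f y}) \<dots> = map_pmf (\<lambda>f. card (X \<inter> {y\<in>Y. f y})) (Pi_pmf Y False (\<lambda>_. bernoulli_pmf p))"
    unfolding pmf.map_comp o_def by (intro map_pmf_cong refl arg_cong[where f=card]) auto
  finally show ?thesis unfolding Z_dist_def random_subset_def pmf.map_comp o_def by simp
qed

lemma Z''_binomial:
  assumes X: "finite X" and p: "1/2 \<le> p" "p \<le> 1"
  shows "Z''_dist X p Y = binomial_pmf (card (X \<inter> Y)) p"
proof -
  let ?I = "X \<inter> Y"
  define q where "q = 2 * (1 - p)"
  have q: "0 \<le> q" "q \<le> 1" using p by (auto simp: q_def)
  have I: "finite ?I" using X by simp
  define K where "K = (\<lambda>T1. Pi_pmf T1 False (\<lambda>_. bernoulli_pmf (1/2)) \<bind>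
          (\<lambda>c. return_pmf (card (?I - T1) + card {y\<in>T1. c y})))"
  have "Z''_dist X p Y = (binomial_pmf (card ?I) q \<bind> (\<lambda>k. pmf_of_set {T. T \<subseteq> ?I \<and> card T = k})) \<bind> K"
    unfolding Z''_dist_def K_def q_def by (simp add: bind_assoc_pmf)
  also have "\<dots> = random_subset ?I q \<bind> K"
    using random_subset_binomial[OF I q] by simp
  also have "\<dots> = Pi_pmf ?I False (\<lambda>_. bernoulli_pmf q) \<bind> (\<lambda>f. K {y\<in>?I. f y})"
    unfolding random_subset_def by (simp add: bind_map_pmf)
  also have "\<dots> = Pi_pmf ?I False (\<lambda>_. bernoulli_pmf q) \<bind> (\<lambda>f. Pi_pmf ?I False (\<lambda>_. bernoulli_pmf (1/2)) \<bind>
            (\<lambda>c. return_pmf (card {y\<in>?I. \<not> f y \<or> c y})))"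
  proof (intro bind_pmf_cong refl)
    fix f
    let ?T = "{y\<in>?I. f y}"
    have "K ?T = map_pmf (\<lambda>c x. if x \<in> ?T then c x else False) (Pi_pmf ?I False (\<lambda>_. bernoulli_pmf (1/2))) \<bind>
          (\<lambda>c. return_pmf (card (?I - ?T) + card {y\<in>?T. c y}))"
      unfolding K_def using I by (subst Pi_pmf_subset[of ?I]) auto
    also have "\<dots> = Pi_pmf ?I False (\<lambda>_. bernoulli_pmf (1/2)) \<bind>
            (\<lambda>c. return_pmf (card {y\<in>?I. \<not> f y \<or> c y}))"
    proof -
      have ce: "card (?I - ?T) + card {y\<in>?T. c y} = card {y\<in>?I. \<not> f y \<or> c y}" for c
      proof -
        have u: "{y\<in>?I. \<not> f y \<or> c y} = (?I - ?T) \<union> {y\<in>?T. c y}" by blast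
        have d: "(?I - ?T) \<inter> {y\<in>?T. c y} = {}" by blast
        have f1: "finite (?I - ?T)" using I by blast
        have f2: "finite {y\<in>?T. c y}" using I by (rule finite_subset[rotated]) blast
        show ?thesis unfolding u using card_Un_disjoint[OF f1 f2 d] by simp
      qed
      have "{y\<in>?T. (if y \<in> ?T then c y else False)} = {y\<in>?T. c y}" for c by auto
      then have "card (?I - ?T) + card {y\<in>?T. (if y \<in> ?T then c y else False)} = card {y\<in>?I. \<not> f y \<or> c y}" for c
        using ce by presburger
      then show ?thesis by (simp add: bind_map_pmf)
    qed
    finally show "K ?T = Pi_pmf ?I False (\<lambda>_. bernoulli_pmf (1/2)) \<bind>
            (\<lambda>c. return_pmf (card {y\<in>?I. \<not> f y \<or> c y}))" .
  qed
  also have "\<dots> = binomial_pmf (card ?I) (1 - q/2)"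
    by (rule mix_binomial[OF I q])
  also have "1 - q/2 = p" unfolding q_def by (simp add: field_simps)
  finally show ?thesis .
qed

theorem theorem1:
  fixes X Y :: "'a set" and p :: real
  assumes "finite X" and "finite Y" and "1/2 \<le> p" and "p \<le> 1"
  shows "Z_dist X p Y = Z''_dist X p Y
     \<and> (\<forall>\<epsilon> \<delta>. \<epsilon> > 0 \<and> 0 \<le> \<delta> \<and> \<delta> < 1 \<longrightarrow>
          (diff_private \<epsilon> \<delta> (Z_dist X p) \<longleftrightarrow> diff_private \<epsilon> \<delta> (Z''_dist X p)))"
proof -
  have eq: "Z_dist X p Y' = Z''_dist X p Y'" if "finite Y'" for Y'
    using Z_binomial[OF assms(1) that] Z''_binomial[OF assms(1) assms(3,4)] assms(3,4) by simp
  have "diff_private \<epsilon> \<delta> (Z_dist X p) \<longleftrightarrow> diff_private \<epsilon> \<delta> (Z''_dist X p)" for \<epsilon> \<delta>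
    unfolding diff_private_def using eq by auto
  then show ?thesis using eq[OF assms(2)] by blast
qed

end
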